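(* For every $n\ge1$, there is a bijection between the set of walks of length $2n-2$ in the path graph $P_7$ that start and end at the middle vertex $v_4$ and the set of rectangular permutations in $S_n$.
   Context: $P_7$ is the path graph with vertices $v_1,\dots,v_7$ and edges $v_iv_{i+1}$ for $1\le i\le 6$. A walk of length $\ell$ is a sequence of vertices $w_0,w_1,\dots,w_\ell$ with $w_{j-1}$ and $w_j$ adjacent for all $j$. A permutation is rectangular if it avoids the patterns $2413$, $2431$, $4213$ and $4231$. *)

theory Defs
  imports "HOL-Combinatorics.Permutations"
begin

definition P7_vertices :: "nat set" where
  "P7_vertices = {1..7}"

definition P7_adj :: "nat \<Rightarrow> nat \<Rightarrow> bool" where
  "P7_adj i j \<longleftrightarrow> i \<in> P7_vertices \<and> j \<in> P7_vertices \<and> (j = i + 1 \<or> i = j + 1)"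

definition P7_walk :: "nat \<Rightarrow> nat list \<Rightarrow> bool" where
  "P7_walk l w \<longleftrightarrow> length w = l + 1 \<and> set w \<subseteq> P7_vertices \<and>
     (\<forall>j<l. P7_adj (w ! j) (w ! (j + 1)))"

definition P7_walks_v4 :: "nat \<Rightarrow> nat list set" where
  "P7_walks_v4 l = {w. P7_walk l w \<and> w ! 0 = 4 \<and> w ! l = 4}"

definition contains_pattern :: "nat \<Rightarrow> (nat \<Rightarrow> nat) \<Rightarrow> nat list \<Rightarrow> bool" where
  "contains_pattern n s tau \<longleftrightarrow>
     (\<exists>idx :: nat \<Rightarrow> nat. strict_mono_on {..<length tau} idx \<and>
        idx ` {..<length tau} \<subseteq> {1..n} \<and>
        (\<forall>a<length tau. \<forall>b<length tau. s (idx a) < s (idx b) \<longleftrightarrow> tau ! a < tau ! b))"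

definition rectangular :: "nat \<Rightarrow> (nat \<Rightarrow> nat) \<Rightarrow> bool" where
  "rectangular n s \<longleftrightarrow>
     \<not> contains_pattern n s [2,4,1,3] \<and> \<not> contains_pattern n s [2,4,3,1] \<and>
     \<not> contains_pattern n s [4,2,1,3] \<and> \<not> contains_pattern n s [4,2,3,1]"

definition rect_perms :: "nat \<Rightarrow> (nat \<Rightarrow> nat) set" where
  "rect_perms n = {s. s permutes {1..n} \<and> rectangular n s}"

end

theory Submission imports Defs "HOL-Library.Sublist" begin

lemma subseq_map_inv:
  "subseq ws (map h xs) \<Longrightarrow> \<exists>zs. subseq zs xs \<and> ws = map h zs"
proof (induction xs arbitrary: ws)
  case Nil then show ?case by auto
next
  case (Cons x xs)
  show ?case
  proof (cases ws)
    case Nil then show ?thesis by auto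
  next
    case (Cons w ws')
    with Cons.prems have "(w = h x \<and> subseq ws' (map h xs)) \<or> subseq ws (map h xs)" by (auto split: if_splits)
    then show ?thesis
    proof
      assume a: "w = h x \<and> subseq ws' (map h xs)"
      then obtain zs where "subseq zs xs" "ws' = map h zs" using Cons.IH by blast
      then show ?thesis using a Cons by (intro exI[of _ "x#zs"]) auto
    next
      assume "subseq ws (map h xs)"
      then obtain zs where "subseq zs xs" "ws = map h zs" using Cons.IH by blast
      then show ?thesis by (intro exI[of _ zs]) auto
    qed
  qed
qed

lemma subseq_insert_cases:
  assumes "subseq zs (A @ x # B)"
  shows "subseq zs (A @ B) \<or> (\<exists>P Q. zs = P @ x # Q \<and> subseq P A \<and> subseq Q B)"
proof -
  obtain z1 z2 where z: "zs = z1 @ z2" "subseq z1 A" "subseq z2 (x # B)"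
    using assms by (auto elim: subseq_appendE)
  show ?thesis
  proof (cases "subseq z2 B")
    case True
    then show ?thesis using z by (simp add: list_emb_append_mono)
  next
    case False
    then obtain z2' where "z2 = x # z2'" "subseq z2' B"
      using z(3) by (cases z2) (auto split: if_splits)
    then show ?thesis using z by auto
  qed
qed

lemma subseq_sorted_wrt: "subseq xs ys \<Longrightarrow> sorted_wrt R ys \<Longrightarrow> sorted_wrt R xs"
  by (induction rule: list_emb.induct) (auto dest: list_emb_set)

lemma subseq_set: "subseq xs ys \<Longrightarrow> set xs \<subseteq> set ys"
  by (induction rule: list_emb.induct) auto

lemma subseq_two:
  "r1 \<in> set R \<Longrightarrow> r2 \<in> set R \<Longrightarrow> r1 \<noteq> r2 \<Longrightarrow> subseq [r1, r2] R \<or> subseq [r2, r1] R"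
proof (induction R)
  case Nil then show ?case by simp
next
  case (Cons r R)
  then show ?case by (auto simp: subseq_singleton_left)
qed


definition bad :: "nat \<Rightarrow> nat \<Rightarrow> nat \<Rightarrow> nat \<Rightarrow> bool" where
  "bad a b c d \<longleftrightarrow> (a < b \<and> ((c < a \<and> a < d \<and> d < b) \<or> (d < a \<and> a < c \<and> c < b))) \<or>
                   (b < a \<and> ((c < b \<and> b < d \<and> d < a) \<or> (d < b \<and> b < c \<and> c < a)))"

definition rect :: "nat list \<Rightarrow> bool" where
  "rect xs \<longleftrightarrow> (\<forall>a b c d. subseq [a,b,c,d] xs \<longrightarrow> \<not> bad a b c d)"

lemma rect_subseq: "subseq xs ys \<Longrightarrow> rect ys \<Longrightarrow> rect xs"
  unfolding rect_def
proof (intro allI impI)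
  fix a b c d
  assume 1: "subseq xs ys" and 2: "\<forall>a b c d. subseq [a, b, c, d] ys \<longrightarrow> \<not> bad a b c d"
    and 3: "subseq [a, b, c, d] xs"
  have "subseq [a,b,c,d] ys" using subseq_order.order_trans[OF 3 1] .
  then show "\<not> bad a b c d" using 2 by simp
qed

lemma rect_del: "rect (A @ x # B) \<Longrightarrow> rect (A @ B)"
proof -
  have "subseq B (x # B)" by (rule list_emb_Cons) (rule subseq_order.order_refl)
  then have "subseq (A @ B) (A @ x # B)" by (simp only: subseq_append')
  then show "rect (A @ x # B) \<Longrightarrow> rect (A @ B)" by (rule rect_subseq)
qed

lemma bad_mono:
  assumes h: "\<forall>u\<in>S. \<forall>v\<in>S. u < v \<longrightarrow> h u < (h v :: nat)"
    and "a \<in> S" "b \<in> S" "c \<in> S" "d \<in> S"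
  shows "bad (h a) (h b) (h c) (h d) = bad a b c d"
proof -
  have l: "h u < h v \<longleftrightarrow> u < v" if "u \<in> S" "v \<in> S" for u v
    using h that by (metis linorder_neqE_nat order_less_asym')
  show ?thesis unfolding bad_def using assms(2-5) by (simp add: l)
qed

lemma len4: "length zs = 4 \<Longrightarrow> \<exists>a b c d. zs = [a,b,c,d]"
  by (cases zs; cases "tl zs"; cases "tl (tl zs)"; cases "tl (tl (tl zs))"; cases "tl (tl (tl (tl zs)))"; simp)

lemma rect_map:
  assumes h: "\<forall>u\<in>set xs. \<forall>v\<in>set xs. u < v \<longrightarrow> h u < h v" and r: "rect xs"
  shows "rect (map h xs)"
  unfolding rect_def
proof (intro allI impI notI)
  fix a b c d
  assume s: "subseq [a,b,c,d] (map h xs)" and bd: "bad a b c d"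
  obtain zs where z: "subseq zs xs" "[a,b,c,d] = map h zs" using subseq_map_inv[OF s] by metis
  have "length [a,b,c,d] = length zs" using z(2) by simp
  then have "length zs = 4" by simp
  then obtain a' b' c' d' where zs: "zs = [a',b',c',d']" using len4 by blast
  have zz: "a = h a'" "b = h b'" "c = h c'" "d = h d'" using z(2) zs by auto
  have "set zs \<subseteq> set xs" using z(1) by (rule subseq_set)
  then have "bad a' b' c' d'" using bd zz zs bad_mono[OF h, of a' b' c' d'] by simp
  moreover have "subseq [a',b',c',d'] xs" using z(1) zs by simp
  ultimately show False using r unfolding rect_def by blast
qed

lemma split1: "P @ x # Q = [d] \<Longrightarrow> P = [] \<and> x = d \<and> Q = []"
  by (cases P) auto
lemma split2: "P @ x # Q = [c,d] \<Longrightarrow> (P=[] \<and> x=c \<and> Q=[d]) \<or> (P=[c] \<and> x=d \<and> Q=[])"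
  by (cases P) (auto dest: split1)
lemma split3: "P @ x # Q = [b,c,d] \<Longrightarrow> (P=[] \<and> x=b \<and> Q=[c,d]) \<or> (P=[b] \<and> x=c \<and> Q=[d]) \<or> (P=[b,c] \<and> x=d \<and> Q=[])"
  by (cases P) (auto dest: split2)

lemma split4:
  "P @ x # Q = [a,b,c,d] \<Longrightarrow> (P=[] \<and> x=a \<and> Q=[b,c,d]) \<or> (P=[a] \<and> x=b \<and> Q=[c,d]) \<or>
     (P=[a,b] \<and> x=c \<and> Q=[d]) \<or> (P=[a,b,c] \<and> x=d \<and> Q=[])"
  by (cases P) (auto dest: split3)


lemma subseq_cons_app: "x \<in> set A \<Longrightarrow> subseq Q B \<Longrightarrow> subseq (x # Q) (A @ B)"
  using list_emb_append_mono[of "(=)" "[x]" A Q B] by (simp add: subseq_singleton_left)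

lemma rect_insert:
  assumes r: "rect (A @ B)" and mA: "m \<in> set A" and mx: "x < m"
    and ext: "(\<forall>r\<in>set B. x < r) \<or> (\<forall>r\<in>set B. r < x)"
    and int: "\<forall>v\<in>set A. \<forall>r\<in>set B. \<not>(x < v \<and> v < r) \<and> \<not>(r < v \<and> v < x)"
    and Bne: "B \<noteq> []" and dAB: "set A \<inter> set B = {}"
  shows "rect (A @ x # B)"
  unfolding rect_def
proof (intro allI impI notI)
  fix a b c d
  assume s: "subseq [a,b,c,d] (A @ x # B)" and bd: "bad a b c d"
  from subseq_insert_cases[OF s] show False
  proof
    assume "subseq [a,b,c,d] (A @ B)"
    then show False using r bd unfolding rect_def by blast
  next
    assume "\<exists>P Q. [a,b,c,d] = P @ x # Q \<and> subseq P A \<and> subseq Q B"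
    then obtain P Q where PQ: "P @ x # Q = [a,b,c,d]" "subseq P A" "subseq Q B" by metis
    from split4[OF PQ(1)] show False
    proof (elim disjE conjE)
      assume 1: "P = []" "x = a" "Q = [b,c,d]"
      then have bcd: "b \<in> set B" "c \<in> set B" "d \<in> set B" using PQ(3) subseq_set by fastforce+
      from ext show False
      proof
        assume "\<forall>r\<in>set B. x < r"
        then show False using bcd bd 1 unfolding bad_def by auto
      next
        assume lt: "\<forall>r\<in>set B. r < x"
        have "bad m b c d" using bcd bd 1 lt mx unfolding bad_def by auto
        moreover have "subseq [m,b,c,d] (A @ B)" using subseq_cons_app[OF mA] PQ(3) 1 by simp
        ultimately show False using r unfolding rect_def by blast
      qed
    next
      assume 1: "P = [a]" "x = b" "Q = [c,d]"
      then have cd: "c \<in> set B" "d \<in> set B" using PQ(3) subseq_set by fastforce+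
      have aA: "a \<in> set A" using PQ(2) 1 subseq_set by fastforce
      show False using ext int[rule_format, OF aA cd(1)] int[rule_format, OF aA cd(2)] cd bd 1
        unfolding bad_def by auto
    next
      assume 1: "P = [a,b]" "x = c" "Q = [d]"
      then have dB: "d \<in> set B" using PQ(3) subseq_set by fastforce
      have aA: "a \<in> set A" "b \<in> set A" using PQ(2) 1 subseq_set by fastforce+
      show False using int[rule_format, OF aA(1) dB] int[rule_format, OF aA(2) dB] bd 1
        unfolding bad_def by auto
    next
      assume 1: "P = [a,b,c]" "x = d" "Q = []"
      obtain r where rB: "r \<in> set B" using Bne by (cases B) auto
      have aA: "a \<in> set A" "b \<in> set A" using PQ(2) 1 subseq_set by fastforce+
      have "a \<noteq> r" "b \<noteq> r" using aA rB dAB by auto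
      then have "bad a b c r" using int[rule_format, OF aA(1) rB] int[rule_format, OF aA(2) rB] bd 1
        unfolding bad_def by auto
      moreover have "subseq [a,b,c,r] (A @ B)"
        using list_emb_append_mono[of "(=)" "[a,b,c]" A "[r]" B] PQ(2) 1 rB
        by (simp add: subseq_singleton_left)
      ultimately show False using r unfolding rect_def by blast
    qed
  qed
qed

lemma rect_snoc_max:
  assumes r: "rect ys" and m: "\<forall>v\<in>set ys. v < m"
  shows "rect (ys @ [m])"
proof -
  have "rect (ys @ m # [])"
    unfolding rect_def
  proof (intro allI impI notI)
    fix a b c d
    assume s: "subseq [a,b,c,d] (ys @ m # [])" and bd: "bad a b c d"
    from subseq_insert_cases[OF s] show False
    proof
      assume "subseq [a,b,c,d] (ys @ [])"
      then show False using r bd unfolding rect_def by simp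
    next
      assume "\<exists>P Q. [a,b,c,d] = P @ m # Q \<and> subseq P ys \<and> subseq Q []"
      then obtain P Q where PQ: "P @ m # Q = [a,b,c,d]" "subseq P ys" "subseq Q []" by metis
      then have "Q = []" by simp
      then have "P = [a,b,c]" "m = d" using split4[OF PQ(1)] by auto
      then have "a \<in> set ys" "b \<in> set ys" using PQ(2) subseq_set by fastforce+
      then show False using m bd \<open>m = d\<close> unfolding bad_def by auto
    qed
  qed
  then show ?thesis by simp
qed

lemma rect_ins_max_before_last:
  assumes r: "rect (L @ [y])" and m: "\<forall>v\<in>set L. v < m"
  shows "rect (L @ m # [y])"
  unfolding rect_def
proof (intro allI impI notI)
  fix a b c d
  assume s: "subseq [a,b,c,d] (L @ m # [y])" and bd: "bad a b c d"
  from subseq_insert_cases[OF s] show False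
  proof
    assume "subseq [a,b,c,d] (L @ [y])"
    then show False using r bd unfolding rect_def by simp
  next
    assume "\<exists>P Q. [a,b,c,d] = P @ m # Q \<and> subseq P L \<and> subseq Q [y]"
    then obtain P Q where PQ: "P @ m # Q = [a,b,c,d]" "subseq P L" "subseq Q [y]" by metis
    then have "length Q \<le> 1" using list_emb_length by fastforce
    then have "(P = [a,b,c] \<and> m = d) \<or> (P = [a,b] \<and> m = c)" using split4[OF PQ(1)] by auto
    then show False
    proof
      assume "P = [a,b,c] \<and> m = d"
      then have "a \<in> set L" "b \<in> set L" "m = d" using PQ(2) subseq_set by fastforce+
      then show False using m bd unfolding bad_def by auto
    next
      assume "P = [a,b] \<and> m = c"
      then have "a \<in> set L" "b \<in> set L" "m = c" using PQ(2) subseq_set by fastforce+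
      then show False using m bd unfolding bad_def by auto
    qed
  qed
qed



declare upt_Suc[simp del]

lemma all4: "(\<forall>i<(4::nat). P i) \<longleftrightarrow> P 0 \<and> P 1 \<and> P 2 \<and> P 3"
  by (auto simp: less_Suc_eq numeral_eq_Suc)

lemma match_iff:
  "(\<forall>i<4. \<forall>j<4. [a,b,c,d]!i < [a,b,c,d]!j \<longleftrightarrow> (tau::nat list)!i < tau!j) \<longleftrightarrow>
   (\<forall>i<4. \<forall>j<4. [a,b,c,d]!i < [a,b,c,d]!j \<longleftrightarrow> tau!i < tau!j)"
  by simp

lemma bad_iff: "bad a b c d \<longleftrightarrow>
  (\<exists>tau \<in> {[2,4,1,3],[2,4,3,1],[4,2,1,3],[4,2,3,1]}.
     \<forall>i<4. \<forall>j<4. [a,b,c,d]!i < [a,b,c,d]!j \<longleftrightarrow> (tau::nat list)!i < tau!j)"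
proof -
  have e: "(\<forall>i<4. \<forall>j<4. [a,b,c,d]!i < [a,b,c,d]!j \<longleftrightarrow> (tau::nat list)!i < tau!j) \<longleftrightarrow>
     (\<forall>i<4. \<forall>j<4. [a,b,c,d]!i < [a,b,c,d]!j \<longleftrightarrow> tau!i < tau!j)" for tau by simp
  have m1: "(\<forall>i<4. \<forall>j<4. [a,b,c,d]!i < [a,b,c,d]!j \<longleftrightarrow> [2,4,1,3]!i < ([2,4,1,3]::nat list)!j) \<longleftrightarrow> c<a \<and> a<d \<and> d<b"
    unfolding all4 by auto
  have m2: "(\<forall>i<4. \<forall>j<4. [a,b,c,d]!i < [a,b,c,d]!j \<longleftrightarrow> [2,4,3,1]!i < ([2,4,3,1]::nat list)!j) \<longleftrightarrow> d<a \<and> a<c \<and> c<b"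
    unfolding all4 by auto
  have m3: "(\<forall>i<4. \<forall>j<4. [a,b,c,d]!i < [a,b,c,d]!j \<longleftrightarrow> [4,2,1,3]!i < ([4,2,1,3]::nat list)!j) \<longleftrightarrow> c<b \<and> b<d \<and> d<a"
    unfolding all4 by auto
  have m4: "(\<forall>i<4. \<forall>j<4. [a,b,c,d]!i < [a,b,c,d]!j \<longleftrightarrow> [4,2,3,1]!i < ([4,2,3,1]::nat list)!j) \<longleftrightarrow> d<b \<and> b<c \<and> c<a"
    unfolding all4 by auto
  have "bad a b c d \<longleftrightarrow> (c<a \<and> a<d \<and> d<b) \<or> (d<a \<and> a<c \<and> c<b) \<or> (c<b \<and> b<d \<and> d<a) \<or> (d<b \<and> b<c \<and> c<a)"
    unfolding bad_def by auto
  then show ?thesis using m1 m2 m3 m4 by simp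
qed

lemma contains_iff:
  "contains_pattern n s tau \<longleftrightarrow>
   (\<exists>zs. subseq zs (map s [1..<n+1]) \<and> length zs = length tau \<and>
      (\<forall>i<length tau. \<forall>j<length tau. zs!i < zs!j \<longleftrightarrow> tau!i < tau!j))"
proof
  assume "contains_pattern n s tau"
  then obtain idx where i: "strict_mono_on {..<length tau} idx" "idx ` {..<length tau} \<subseteq> {1..n}"
    "\<forall>a<length tau. \<forall>b<length tau. s (idx a) < s (idx b) \<longleftrightarrow> tau ! a < tau ! b"
    unfolding contains_pattern_def by metis
  let ?ws = "map idx [0..<length tau]"
  have "sorted_wrt (<) ?ws"
    using i(1) by (auto simp: sorted_wrt_iff_nth_less strict_mono_on_def)
  moreover have "set ?ws \<subseteq> set [1..<n+1]"
  proof
    fix x assume "x \<in> set ?ws"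
    then obtain k where "k < length tau" "x = idx k" by auto
    then have "x \<in> {1..n}" using i(2) by (simp add: image_subset_iff)
    then show "x \<in> set [1..<n+1]" by simp
  qed
  ultimately have "subseq ?ws [1..<n+1]"
    by (intro sorted_subset_imp_subseq) (simp_all del: upt_Suc)
  then have "subseq (map s ?ws) (map s [1..<n+1])" by (rule subseq_map)
  then show "\<exists>zs. subseq zs (map s [1..<n+1]) \<and> length zs = length tau \<and>
      (\<forall>i<length tau. \<forall>j<length tau. zs!i < zs!j \<longleftrightarrow> tau!i < tau!j)"
    using i(3) by (intro exI[of _ "map s ?ws"]) auto
next
  assume "\<exists>zs. subseq zs (map s [1..<n+1]) \<and> length zs = length tau \<and>
      (\<forall>i<length tau. \<forall>j<length tau. zs!i < zs!j \<longleftrightarrow> tau!i < tau!j)"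
  then obtain zs where z: "subseq zs (map s [1..<n+1])" "length zs = length tau"
      "\<forall>i<length tau. \<forall>j<length tau. zs!i < zs!j \<longleftrightarrow> tau!i < tau!j" by blast
  obtain ws where w: "subseq ws [1..<n+1]" "zs = map s ws" using subseq_map_inv[OF z(1)] by (metis subseq_map_inv[OF z(1)])
  have sw: "sorted_wrt (<) ws" using subseq_sorted_wrt[OF w(1)] by (simp add: sorted_wrt_upt)
  have sws: "set ws \<subseteq> {1..n}" using subseq_set[OF w(1)] by auto
  have lw: "length ws = length tau" using z(2) w(2) by simp
  show "contains_pattern n s tau"
    unfolding contains_pattern_def
  proof (intro exI[of _ "\<lambda>i. ws ! i"] conjI)
    show "strict_mono_on {..<length tau} ((!) ws)"
      using sw lw by (auto simp: strict_mono_on_def sorted_wrt_iff_nth_less)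
    show "(!) ws ` {..<length tau} \<subseteq> {1..n}"
    proof
      fix y assume "y \<in> (!) ws ` {..<length tau}"
      then obtain k where "k < length tau" "y = ws ! k" by auto
      then have "y \<in> set ws" using lw by simp
      then show "y \<in> {1..n}" using sws by blast
    qed
    show "\<forall>a<length tau. \<forall>b<length tau. s (ws ! a) < s (ws ! b) \<longleftrightarrow> tau ! a < tau ! b"
      using z(3) w(2) lw by auto
  qed
qed

lemma rect_iff_rectangular: "rectangular n s \<longleftrightarrow> rect (map s [1..<n+1])"
proof -
  let ?xs = "map s [1..<n+1]"
  let ?T = "{[2,4,1,3],[2,4,3,1],[4,2,1,3],[4,2,3,1]} :: nat list set"
  have "(\<exists>tau \<in> ?T. contains_pattern n s tau) \<longleftrightarrow>
        (\<exists>a b c d. subseq [a,b,c,d] ?xs \<and> bad a b c d)"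
  proof
    assume "\<exists>tau \<in> ?T. contains_pattern n s tau"
    then obtain tau where t0: "tau \<in> ?T" "contains_pattern n s tau" by blast
    then obtain zs where t: "subseq zs ?xs" "length zs = length tau"
      "\<forall>i<length tau. \<forall>j<length tau. zs!i < zs!j \<longleftrightarrow> tau!i < tau!j"
      unfolding contains_iff by blast
    have l4: "length tau = 4" using t0(1) by auto
    have "length zs = 4" using t(2) l4 by simp
    then obtain a b c d where zs: "zs = [a,b,c,d]" using len4 by blast
    have "\<forall>i<4. \<forall>j<4. [a,b,c,d]!i < [a,b,c,d]!j \<longleftrightarrow> tau!i < tau!j" using t(3) unfolding l4 zs .
    then have "bad a b c d" unfolding bad_iff using t0(1) by blast
    then show "\<exists>a b c d. subseq [a,b,c,d] ?xs \<and> bad a b c d" using t(1) zs by blast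
  next
    assume "\<exists>a b c d. subseq [a,b,c,d] ?xs \<and> bad a b c d"
    then obtain a b c d where abcd: "subseq [a,b,c,d] ?xs" "bad a b c d" by blast
    then obtain tau where t: "tau \<in> ?T"
      "\<forall>i<4. \<forall>j<4. [a,b,c,d]!i < [a,b,c,d]!j \<longleftrightarrow> (tau::nat list)!i < tau!j"
      unfolding bad_iff by blast
    have l4: "length tau = 4" using t(1) by auto
    have "contains_pattern n s tau" unfolding contains_iff
      by (rule exI[of _ "[a,b,c,d]"]) (use abcd(1) t(2) l4 in simp)
    then show "\<exists>tau \<in> ?T. contains_pattern n s tau"
      using t(1) by blast
  qed
  then show ?thesis unfolding rectangular_def rect_def by auto
qed

definition CC :: "nat \<Rightarrow> nat list set" where
  "CC m = {xs. distinct xs \<and> set xs = {1..m} \<and> rect xs}"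

lemma CC_length: "xs \<in> CC m \<Longrightarrow> length xs = m"
  unfolding CC_def using distinct_card by fastforce

lemma finite_CC: "finite (CC m)"
proof -
  have "CC m \<subseteq> {xs. set xs \<subseteq> {1..m} \<and> length xs = m}"
    using CC_length unfolding CC_def by blast
  moreover have "finite {xs. set xs \<subseteq> {1..m} \<and> length xs = m}"
    by (rule finite_lists_length_eq) simp
  ultimately show ?thesis by (rule finite_subset)
qed

lemma bij_perms_CC: "bij_betw (\<lambda>s. map s [1..<n+1]) (rect_perms n) (CC n)"
  unfolding bij_betw_def
proof (intro conjI)
  show "inj_on (\<lambda>s. map s [1..<n+1]) (rect_perms n)"
  proof (rule inj_onI)
    fix s t assume s: "s \<in> rect_perms n" and t: "t \<in> rect_perms n"
      and e: "map s [1..<n+1] = map t [1..<n+1]"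
    have ps: "s permutes {1..n}" and pt: "t permutes {1..n}" using s t unfolding rect_perms_def by auto
    show "s = t"
    proof
      fix i
      show "s i = t i"
      proof (cases "i \<in> {1..n}")
        case True
        then have "i \<in> set [1..<n+1]" by simp
        then show ?thesis using e by (metis map_eq_conv)
      next
        case False
        then show ?thesis using ps pt by (simp add: permutes_not_in)
      qed
    qed
  qed
next
  show "(\<lambda>s. map s [1..<n+1]) ` rect_perms n = CC n"
  proof
    show "(\<lambda>s. map s [1..<n+1]) ` rect_perms n \<subseteq> CC n"
    proof
      fix xs assume "xs \<in> (\<lambda>s. map s [1..<n+1]) ` rect_perms n"
      then obtain s where s: "s \<in> rect_perms n" "xs = map s [1..<n+1]" by blast
      have ps: "s permutes {1..n}" and rs: "rectangular n s" using s unfolding rect_perms_def by auto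
      have "inj_on s {1..n}" using ps permutes_inj_on by blast
      then have "distinct xs" using s(2) by (simp add: distinct_map atLeastLessThanSuc_atLeastAtMost)
      moreover have "set xs = {1..n}" using s(2) permutes_image[OF ps]
        by (simp add: atLeastLessThanSuc_atLeastAtMost)
      moreover have "rect xs" using rs s(2) rect_iff_rectangular by simp
      ultimately show "xs \<in> CC n" unfolding CC_def by blast
    qed
  next
    show "CC n \<subseteq> (\<lambda>s. map s [1..<n+1]) ` rect_perms n"
    proof
      fix xs assume xs: "xs \<in> CC n"
      have l: "length xs = n" using CC_length[OF xs] .
      define s where "s = (\<lambda>i. if i \<in> {1..n} then xs ! (i - 1) else i)"
      have m: "map s [1..<n+1] = xs"
      proof (rule nth_equalityI)
        show "length (map s [1..<n+1]) = length xs" using l by simp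
        fix i assume "i < length (map s [1..<n+1])"
        then have "i < n" by simp
        then show "map s [1..<n+1] ! i = xs ! i" unfolding s_def by (simp add: nth_upt)
      qed
      have d: "distinct xs" and sx: "set xs = {1..n}" and r: "rect xs" using xs unfolding CC_def by auto
      have "inj_on s (set [1..<n+1])" using d m distinct_map by metis
      then have inj: "inj_on s {1..n}" by (simp add: atLeastLessThanSuc_atLeastAtMost)
      have im: "s ` {1..n} = {1..n}"
      proof -
        have "s ` set [1..<n+1] = set xs" using m by (metis set_map)
        then show ?thesis using sx by (simp add: atLeastLessThanSuc_atLeastAtMost)
      qed
      have "s permutes {1..n}"
      proof (rule bij_imp_permutes)
        show "bij_betw s {1..n} {1..n}" using inj im by (simp add: bij_betw_def)
        show "\<And>x. x \<notin> {1..n} \<Longrightarrow> s x = x" unfolding s_def by auto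
      qed
      moreover have "rectangular n s" using rect_iff_rectangular m r by simp
      ultimately have "s \<in> rect_perms n" unfolding rect_perms_def by blast
      then show "xs \<in> (\<lambda>s. map s [1..<n+1]) ` rect_perms n" using m by force
    qed
  qed
qed

definition EE :: "nat \<Rightarrow> nat \<Rightarrow> nat list set" where
  "EE l v = {w. P7_walk l w \<and> w ! 0 = 4 \<and> w ! l = v}"

lemma EE_sub: "EE l v \<subseteq> {w. set w \<subseteq> {1..7} \<and> length w = l + 1}"
  unfolding EE_def P7_walk_def P7_vertices_def by auto

lemma finite_EE: "finite (EE l v)"
  using finite_subset[OF EE_sub finite_lists_length_eq[of "{1..7::nat}" "l+1"]] by simp

lemma EE_out: "v \<notin> {1..7} \<Longrightarrow> EE l v = {}"
proof -
  assume v: "v \<notin> {1..7}"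
  { fix w assume "w \<in> EE l v"
    then have "length w = l + 1" "set w \<subseteq> {1..7}" "w ! l = v"
      unfolding EE_def P7_walk_def P7_vertices_def by auto
    then have "v \<in> {1..7}" by (metis less_add_one nth_mem subsetD)
    with v have False by simp }
  then show ?thesis by blast
qed

lemma EE_0: "EE 0 v = (if v = 4 then {[4]} else {})"
proof -
  have "w \<in> EE 0 v \<longleftrightarrow> v = 4 \<and> w = [4]" for w
  proof
    assume "w \<in> EE 0 v"
    then have "length w = 1" "w ! 0 = 4" "w ! 0 = v" unfolding EE_def P7_walk_def by auto
    then show "v = 4 \<and> w = [4]" by (cases w) auto
  next
    assume "v = 4 \<and> w = [4]"
    then show "w \<in> EE 0 v" unfolding EE_def P7_walk_def P7_vertices_def by auto
  qed
  then show ?thesis by auto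
qed

lemma EE_Suc:
  assumes v: "v \<in> {1..7}"
  shows "EE (Suc l) v = (\<lambda>w. w @ [v]) ` (EE l (v - 1) \<union> EE l (v + 1))"
proof
  show "EE (Suc l) v \<subseteq> (\<lambda>w. w @ [v]) ` (EE l (v - 1) \<union> EE l (v + 1))"
  proof
    fix w assume w: "w \<in> EE (Suc l) v"
    have len: "length w = l + 2" and sw: "set w \<subseteq> {1..7}"
      and adj: "\<forall>j<Suc l. P7_adj (w ! j) (w ! (j + 1))" and w0: "w ! 0 = 4" and wl: "w ! Suc l = v"
      using w unfolding EE_def P7_walk_def P7_vertices_def by auto
    let ?u = "butlast w"
    have wne: "w \<noteq> []" using len by auto
    have wdec: "w = ?u @ [v]"
      using wne wl len by (metis append_butlast_last_id diff_Suc_1 add_2_eq_Suc' last_conv_nth length_0_conv)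
    have lu: "length ?u = l + 1" using len by simp
    have nu: "?u ! j = w ! j" if "j \<le> l" for j using that len by (simp add: nth_butlast)
    have a: "P7_adj (w ! l) v" using adj wl by auto
    have "P7_walk l ?u"
      unfolding P7_walk_def P7_vertices_def
    proof (intro conjI allI impI)
      show "length ?u = l + 1" by (rule lu)
      show "set ?u \<subseteq> {1..7}" using sw by (meson in_set_butlastD subset_code(1))
      fix j assume "j < l"
      then show "P7_adj (?u ! j) (?u ! (j + 1))" using adj nu by simp
    qed
    moreover have "?u ! 0 = 4" using nu w0 by simp
    moreover have "w ! l = v - 1 \<or> w ! l = v + 1" using a unfolding P7_adj_def by auto
    ultimately have "?u \<in> EE l (v - 1) \<union> EE l (v + 1)" unfolding EE_def using nu by auto
    then show "w \<in> (\<lambda>w. w @ [v]) ` (EE l (v - 1) \<union> EE l (v + 1))" using wdec by blast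
  qed
next
  show "(\<lambda>w. w @ [v]) ` (EE l (v - 1) \<union> EE l (v + 1)) \<subseteq> EE (Suc l) v"
  proof
    fix x assume "x \<in> (\<lambda>w. w @ [v]) ` (EE l (v - 1) \<union> EE l (v + 1))"
    then obtain w u where x: "x = w @ [v]" and wE: "w \<in> EE l u" and u: "u = v - 1 \<or> u = v + 1" by blast
    have len: "length w = l + 1" and sw: "set w \<subseteq> {1..7}"
      and adj: "\<forall>j<l. P7_adj (w ! j) (w ! (j + 1))" and w0: "w ! 0 = 4" and wl: "w ! l = u"
      using wE unfolding EE_def P7_walk_def P7_vertices_def by auto
    have uin: "u \<in> {1..7}" using wl len sw by (metis less_add_one nth_mem subsetD)
    have "P7_adj u v" using u uin v unfolding P7_adj_def P7_vertices_def by auto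
    have nx: "x ! j = w ! j" if "j \<le> l" for j using that len x by (simp add: nth_append)
    have "P7_walk (Suc l) x"
      unfolding P7_walk_def P7_vertices_def
    proof (intro conjI allI impI)
      show "length x = Suc l + 1" using len x by simp
      show "set x \<subseteq> {1..7}" using sw v x by simp
      fix j assume j: "j < Suc l"
      show "P7_adj (x ! j) (x ! (j + 1))"
      proof (cases "j < l")
        case True then show ?thesis using adj nx by simp
      next
        case False
        then have "j = l" using j by simp
        then show ?thesis using nx \<open>P7_adj u v\<close> wl x len by (simp add: nth_append)
      qed
    qed
    moreover have "x ! 0 = 4" using nx w0 by simp
    moreover have "x ! Suc l = v" using x len by (simp add: nth_append)
    ultimately show "x \<in> EE (Suc l) v" unfolding EE_def by simp
  qed
qed

fun ec :: "nat \<Rightarrow> nat \<Rightarrow> nat" where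
  "ec 0 v = (if v = 4 then 1 else 0)"
| "ec (Suc l) v = (if v \<in> {1..7} then ec l (v - 1) + ec l (v + 1) else 0)"

lemma card_EE: "card (EE l v) = ec l v"
proof (induction l arbitrary: v)
  case 0
  then show ?case by (simp add: EE_0)
next
  case (Suc l)
  show ?case
  proof (cases "v \<in> {1..7}")
    case True
    have inj: "inj_on (\<lambda>w. w @ [v]) (EE l (v - 1) \<union> EE l (v + 1))" by (rule inj_onI) simp
    have disj: "EE l (v - 1) \<inter> EE l (v + 1) = {}" unfolding EE_def using True by auto
    have "card (EE (Suc l) v) = card (EE l (v - 1) \<union> EE l (v + 1))"
      unfolding EE_Suc[OF True] using inj by (rule card_image)
    also have "\<dots> = card (EE l (v - 1)) + card (EE l (v + 1))"
      using disj finite_EE by (simp add: card_Un_disjoint)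
    finally show ?thesis using Suc True by simp
  next
    case False
    then show ?thesis by (simp only: EE_out[OF False] ec.simps if_not_P[OF False] card.empty if_False)
  qed
qed

lemma ec_0: "ec l 0 = 0" by (cases l) auto
lemma ec_8: "ec l 8 = 0" by (cases l) auto

lemma ec_step4: "ec (Suc (Suc l)) 4 = 2 * ec l 4 + (ec l 2 + ec l 6)"
  by (simp add: numeral_eq_Suc)

lemma ec_step26: "ec (Suc (Suc l)) 2 + ec (Suc (Suc l)) 6 = 2 * ec l 4 + 2 * (ec l 2 + ec l 6)"
  using ec_0[of l] ec_8[of l] by (simp add: numeral_eq_Suc)

definition Zset :: "nat \<Rightarrow> nat list set" where "Zset m = {xs \<in> CC m. \<exists>L. xs = L @ [m]}"
definition Oset :: "nat \<Rightarrow> nat list set" where "Oset m = {xs \<in> CC m. \<exists>L y. xs = L @ [m, y]}"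
definition Tset :: "nat \<Rightarrow> nat list set" where "Tset m = {xs \<in> CC m. \<exists>L x y R. xs = L @ m # x # y # R}"
definition Uset :: "nat \<Rightarrow> nat list set" where "Uset m = {xs \<in> CC m. \<exists>L y R. xs = L @ m # y # R}"

lemma ins_interval: "1 \<le> m \<Longrightarrow> insert m {1..m-1} = {1..(m::nat)}"
  by (auto simp: atLeastAtMost_iff)

lemma tw_split: "m \<notin> set A \<Longrightarrow> takeWhile (\<lambda>v. v \<noteq> m) (A @ m # B) = A"
  by (induction A) auto

lemma dw_split: "m \<notin> set A \<Longrightarrow> dropWhile (\<lambda>v. v \<noteq> m) (A @ m # B) = m # B"
  by (induction A) auto

lemma split_unique:
  assumes "distinct (A @ m # B)" "A @ m # B = C @ m # D"
  shows "A = C \<and> B = D"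
proof -
  have "m \<notin> set A" using assms(1) by simp
  moreover have "distinct (C @ m # D)" using assms by metis
  then have "m \<notin> set C" by simp
  ultimately have "takeWhile (\<lambda>v. v \<noteq> m) (A @ m # B) = A" "takeWhile (\<lambda>v. v \<noteq> m) (C @ m # D) = C"
    by (simp_all add: tw_split)
  then have "A = C" using assms(2) by simp
  then show ?thesis using assms(2) by simp
qed

lemma CC_split: "xs \<in> CC m \<Longrightarrow> m \<ge> 1 \<Longrightarrow> \<exists>L R. xs = L @ m # R"
  unfolding CC_def by (auto intro: split_list)

lemma CC_partition:
  assumes "m \<ge> 1"
  shows "CC m = Zset m \<union> Oset m \<union> Tset m"
proof
  show "CC m \<subseteq> Zset m \<union> Oset m \<union> Tset m"
  proof
    fix xs assume xs: "xs \<in> CC m"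
    obtain L R where LR: "xs = L @ m # R" using CC_split[OF xs assms] by blast
    show "xs \<in> Zset m \<union> Oset m \<union> Tset m"
    proof (cases R)
      case Nil then show ?thesis using xs LR unfolding Zset_def by auto
    next
      case (Cons y R')
      show ?thesis
      proof (cases R')
        case Nil then show ?thesis using xs LR Cons unfolding Oset_def by auto
      next
        case (Cons z R'')
        then show ?thesis using xs LR \<open>R = y # R'\<close> unfolding Tset_def by blast
      qed
    qed
  qed
qed (auto simp: Zset_def Oset_def Tset_def)

lemma CC_distinct: "xs \<in> CC m \<Longrightarrow> distinct xs" unfolding CC_def by simp

lemma ZO_disj: "Zset m \<inter> Oset m = {}"
proof -
  { fix xs assume "xs \<in> Zset m" "xs \<in> Oset m"
    then obtain L L' y where "xs = L @ m # []" "xs = L' @ m # [y]" "distinct xs"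
      unfolding Zset_def Oset_def CC_def by auto
    then have "distinct (L @ m # [])" "L @ m # [] = L' @ m # [y]" by simp_all
    from split_unique[OF this] have False by simp }
  then show ?thesis by blast
qed

lemma ZT_disj: "Zset m \<inter> Tset m = {}"
proof -
  { fix xs assume "xs \<in> Zset m" "xs \<in> Tset m"
    then obtain L L' x y R where "xs = L @ m # []" "xs = L' @ m # x # y # R" "distinct xs"
      unfolding Zset_def Tset_def CC_def by auto
    then have "distinct (L @ m # [])" "L @ m # [] = L' @ m # (x # y # R)" by simp_all
    from split_unique[OF this] have False by simp }
  then show ?thesis by blast
qed

lemma OT_disj: "Oset m \<inter> Tset m = {}"
proof -
  { fix xs assume "xs \<in> Oset m" "xs \<in> Tset m"
    then obtain L y L' x z R where "xs = L @ m # [y]" "xs = L' @ m # x # z # R" "distinct xs"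
      unfolding Oset_def Tset_def CC_def by auto
    then have "distinct (L @ m # [y])" "L @ m # [y] = L' @ m # (x # z # R)" by simp_all
    from split_unique[OF this] have False by simp }
  then show ?thesis by blast
qed

lemma Uset_eq: "Uset m = Oset m \<union> Tset m"
proof
  show "Uset m \<subseteq> Oset m \<union> Tset m"
  proof
    fix xs assume "xs \<in> Uset m"
    then obtain L y R where xs: "xs \<in> CC m" "xs = L @ m # y # R" unfolding Uset_def by blast
    show "xs \<in> Oset m \<union> Tset m"
    proof (cases R)
      case Nil then show ?thesis using xs unfolding Oset_def by auto
    next
      case (Cons z R') then show ?thesis using xs unfolding Tset_def by blast
    qed
  qed
qed (auto simp: Uset_def Oset_def Tset_def)

lemma finite_Zset: "finite (Zset m)" and finite_Oset: "finite (Oset m)" and finite_Tset: "finite (Tset m)"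
  and finite_Uset: "finite (Uset m)"
  using finite_CC unfolding Zset_def Oset_def Tset_def Uset_def by auto

lemma card_CC_split: "m \<ge> 1 \<Longrightarrow> card (CC m) = card (Zset m) + card (Oset m) + card (Tset m)"
  using CC_partition[of m] ZO_disj[of m] ZT_disj[of m] OT_disj[of m] finite_Zset finite_Oset finite_Tset
  by (simp add: card_Un_disjoint Int_Un_distrib2)

lemma card_Uset: "card (Uset m) = card (Oset m) + card (Tset m)"
  using Uset_eq[of m] OT_disj[of m] finite_Oset finite_Tset by (simp add: card_Un_disjoint)

lemma Zset_img: "m \<ge> 1 \<Longrightarrow> Zset m = (\<lambda>ys. ys @ [m]) ` CC (m - 1)"
proof
  assume m: "m \<ge> 1"
  show "Zset m \<subseteq> (\<lambda>ys. ys @ [m]) ` CC (m - 1)"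
  proof
    fix xs assume "xs \<in> Zset m"
    then obtain L where xs: "xs \<in> CC m" "xs = L @ [m]" unfolding Zset_def by blast
    have d: "distinct L" "m \<notin> set L" and s: "set L \<union> {m} = {1..m}" and r: "rect (L @ [m])"
      using xs unfolding CC_def by auto
    have "set L = {1..m} - {m}" using s d by auto
    also have "\<dots> = {1..m-1}" using m by auto
    finally have "set L = {1..m-1}" .
    moreover have "rect L" using rect_del[of L m "[]"] r by simp
    ultimately have "L \<in> CC (m - 1)" using d unfolding CC_def by blast
    then show "xs \<in> (\<lambda>ys. ys @ [m]) ` CC (m - 1)" using xs by blast
  qed
next
  assume m: "m \<ge> 1"
  show "(\<lambda>ys. ys @ [m]) ` CC (m - 1) \<subseteq> Zset m"
  proof
    fix xs assume "xs \<in> (\<lambda>ys. ys @ [m]) ` CC (m - 1)"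
    then obtain ys where ys: "ys \<in> CC (m - 1)" "xs = ys @ [m]" by blast
    have d: "distinct ys" and s: "set ys = {1..m-1}" and r: "rect ys" using ys unfolding CC_def by auto
    have "\<forall>v\<in>set ys. v < m" using s m by auto
    then have "rect (ys @ [m])" using rect_snoc_max r by blast
    moreover have "distinct (ys @ [m])" using d s by auto
    moreover have "set (ys @ [m]) = {1..m}" using s m by auto
    ultimately show "xs \<in> Zset m" using ys unfolding Zset_def CC_def by blast
  qed
qed

lemma card_Zset: "m \<ge> 1 \<Longrightarrow> card (Zset m) = card (CC (m - 1))"
  using Zset_img card_image[of "\<lambda>ys. ys @ [m]" "CC (m - 1)"] by (simp add: inj_on_def)

lemma Oset_img: "m \<ge> 2 \<Longrightarrow> Oset m = (\<lambda>ys. butlast ys @ [m, last ys]) ` CC (m - 1)"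
proof
  assume m: "m \<ge> 2"
  show "Oset m \<subseteq> (\<lambda>ys. butlast ys @ [m, last ys]) ` CC (m - 1)"
  proof
    fix xs assume "xs \<in> Oset m"
    then obtain L y where xs: "xs \<in> CC m" "xs = L @ [m, y]" unfolding Oset_def by blast
    have d: "distinct (L @ [y])" "m \<notin> set (L @ [y])" and s: "set (L @ [y]) \<union> {m} = {1..m}"
      and r: "rect (L @ m # [y])"
      using xs unfolding CC_def by auto
    have "set (L @ [y]) = {1..m} - {m}" using s d by auto
    also have "\<dots> = {1..m-1}" using m by auto
    finally have "set (L @ [y]) = {1..m-1}" .
    moreover have "rect (L @ [y])" using rect_del[of L m "[y]"] r by simp
    ultimately have "L @ [y] \<in> CC (m - 1)" using d unfolding CC_def by blast
    moreover have "xs = butlast (L @ [y]) @ [m, last (L @ [y])]" using xs by simp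
    ultimately show "xs \<in> (\<lambda>ys. butlast ys @ [m, last ys]) ` CC (m - 1)" by blast
  qed
next
  assume m: "m \<ge> 2"
  show "(\<lambda>ys. butlast ys @ [m, last ys]) ` CC (m - 1) \<subseteq> Oset m"
  proof
    fix xs assume "xs \<in> (\<lambda>ys. butlast ys @ [m, last ys]) ` CC (m - 1)"
    then obtain ys where ys: "ys \<in> CC (m - 1)" "xs = butlast ys @ [m, last ys]" by blast
    have d: "distinct ys" and s: "set ys = {1..m-1}" and r: "rect ys" using ys unfolding CC_def by auto
    have "ys \<noteq> []" using s m by auto
    then obtain L y where Ly: "ys = L @ [y]" by (metis append_butlast_last_id)
    have "m \<notin> set ys" using s by auto
    have xs': "xs = L @ m # [y]" using ys(2) Ly by simp
    have "\<forall>v\<in>set L. v < m"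
    proof
      fix v assume "v \<in> set L"
      then have "v \<in> set ys" using Ly by simp
      then have "v \<le> m - 1" using s by auto
      then show "v < m" using m by simp
    qed
    then have "rect (L @ m # [y])" using rect_ins_max_before_last r Ly by blast
    moreover have "distinct (L @ m # [y])" using d Ly \<open>m \<notin> set ys\<close> by auto
    moreover have "set (L @ m # [y]) = insert m (set ys)" using Ly by auto
    then have "set (L @ m # [y]) = {1..m}" using s m ins_interval[of m] by simp
    ultimately have "L @ m # [y] \<in> CC m" unfolding CC_def by blast
    then show "xs \<in> Oset m" using xs' unfolding Oset_def by auto
  qed
qed

lemma card_Oset: "m \<ge> 2 \<Longrightarrow> card (Oset m) = card (CC (m - 1))"
proof -
  assume m: "m \<ge> 2"
  have "inj_on (\<lambda>ys. butlast ys @ [m, last ys]) (CC (m - 1))"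
  proof (rule inj_onI)
    fix a b assume a: "a \<in> CC (m - 1)" and b: "b \<in> CC (m - 1)"
      and e: "butlast a @ [m, last a] = butlast b @ [m, last b]"
    have "a \<noteq> []" "b \<noteq> []" using a b m unfolding CC_def by auto
    from e have "(butlast a @ [m]) @ [last a] = (butlast b @ [m]) @ [last b]" by simp
    then have "butlast a = butlast b" "last a = last b" by auto
    then show "a = b" using \<open>a \<noteq> []\<close> \<open>b \<noteq> []\<close> by (metis append_butlast_last_id)
  qed
  then show ?thesis using Oset_img[OF m] card_image by metis
qed

definition sh :: "nat \<Rightarrow> nat \<Rightarrow> nat" where "sh x v = (if x \<le> v then Suc v else v)"
definition unsh :: "nat \<Rightarrow> nat \<Rightarrow> nat" where "unsh x v = (if x < v then v - 1 else v)"

lemma unsh_sh: "unsh x (sh x v) = v" unfolding sh_def unsh_def by auto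
lemma sh_unsh: "v \<noteq> x \<Longrightarrow> sh x (unsh x v) = v" unfolding sh_def unsh_def by auto
lemma sh_neq: "sh x v \<noteq> x" unfolding sh_def by auto
lemma sh_mono: "u < v \<Longrightarrow> sh x u < sh x v" unfolding sh_def by auto
lemma sh_inj: "inj (sh x)" by (metis injI unsh_sh)
lemma unsh_mono: "u < v \<Longrightarrow> u \<noteq> x \<Longrightarrow> v \<noteq> x \<Longrightarrow> unsh x u < unsh x v" unfolding unsh_def by auto
lemma unsh_inj: "inj_on (unsh x) (- {x})" by (rule inj_onI) (metis ComplD singletonI sh_unsh)

lemma sh_image: "1 \<le> x \<Longrightarrow> x \<le> Suc k \<Longrightarrow> sh x ` {1..k} = {1..Suc k} - {x}"
proof
  assume x: "1 \<le> x" "x \<le> Suc k"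
  show "sh x ` {1..k} \<subseteq> {1..Suc k} - {x}" using sh_neq unfolding sh_def by auto
  show "{1..Suc k} - {x} \<subseteq> sh x ` {1..k}"
  proof
    fix v assume v: "v \<in> {1..Suc k} - {x}"
    show "v \<in> sh x ` {1..k}"
    proof (cases "v < x")
      case True
      then have "sh x v = v" "v \<in> {1..k}" using v x unfolding sh_def by auto
      then show ?thesis by (metis imageI)
    next
      case False
      then have "v > x" using v by auto
      then have "sh x (v - 1) = v" "v - 1 \<in> {1..k}" using v x unfolding sh_def by auto
      then show ?thesis by (metis imageI)
    qed
  qed
qed

lemma unsh_image: "1 \<le> x \<Longrightarrow> x \<le> Suc k \<Longrightarrow> unsh x ` ({1..Suc k} - {x}) = {1..k}"
proof -
  assume x: "1 \<le> x" "x \<le> Suc k"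
  have "unsh x ` ({1..Suc k} - {x}) = unsh x ` sh x ` {1..k}" using sh_image[OF x] by simp
  also have "\<dots> = {1..k}" by (simp add: image_image unsh_sh)
  finally show ?thesis .
qed

definition fT :: "nat \<Rightarrow> nat list \<Rightarrow> bool \<times> nat list" where
  "fT k xs = (let L = takeWhile (\<lambda>v. v \<noteq> Suc k) xs; D = dropWhile (\<lambda>v. v \<noteq> Suc k) xs;
     x = D ! 1; R = drop 2 D in (x < hd R, map (unsh x) (L @ Suc k # R)))"

definition gT :: "nat \<Rightarrow> bool \<times> nat list \<Rightarrow> nat list" where
  "gT k p = (let b = fst p; ys = snd p; L = takeWhile (\<lambda>v. v \<noteq> k) ys;
     R = tl (dropWhile (\<lambda>v. v \<noteq> k) ys); x = (if b then Min (set R) else Suc (Max (set R)))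
     in map (sh x) L @ Suc k # x # map (sh x) R)"

lemma fT_eq: "Suc k \<notin> set L \<Longrightarrow> fT k (L @ Suc k # x # R) = (x < hd R, map (unsh x) (L @ Suc k # R))"
  by (simp add: fT_def tw_split dw_split Let_def)

lemma gT_eq: "k \<notin> set L \<Longrightarrow> gT k (b, L @ k # R) =
   map (sh (if b then Min (set R) else Suc (Max (set R)))) L @ Suc k #
   (if b then Min (set R) else Suc (Max (set R))) # map (sh (if b then Min (set R) else Suc (Max (set R)))) R"
  by (simp add: gT_def tw_split dw_split Let_def)

lemma ext_rect:
  assumes r: "rect (L @ m # x # R)" and xm: "x < m" and Rm: "\<forall>v\<in>set R. v < m"
    and r1: "r1 \<in> set R" and r2: "r2 \<in> set R" and lt: "r1 < x" "x < r2"
  shows False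
proof -
  have ne: "r1 \<noteq> r2" using lt by simp
  have r2m: "r2 < m" using Rm r2 by blast
  from subseq_two[OF r1 r2 ne] show False
  proof
    assume "subseq [r1, r2] R"
    then have "subseq ([] @ [m, x, r1, r2]) (L @ m # x # R)"
      by (intro list_emb_append_mono) auto
    moreover have "bad m x r1 r2" unfolding bad_def using lt xm r2m by auto
    ultimately show False using r unfolding rect_def by auto
  next
    assume "subseq [r2, r1] R"
    then have "subseq ([] @ [m, x, r2, r1]) (L @ m # x # R)"
      by (intro list_emb_append_mono) auto
    moreover have "bad m x r2 r1" unfolding bad_def using lt xm r2m by auto
    ultimately show False using r unfolding rect_def by auto
  qed
qed

lemma int_rect:
  assumes r: "rect (L @ m # B)" and Bm: "\<forall>v\<in>set B. v < m"
    and v: "v \<in> set L" and r1: "r1 \<in> set B" and r2: "r2 \<in> set B" and lt: "r1 < v" "v < r2"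
  shows False
proof -
  have ne: "r1 \<noteq> r2" using lt by simp
  have r2m: "r2 < m" using Bm r2 by blast
  have vL: "subseq [v] L" using v by (simp add: subseq_singleton_left)
  from subseq_two[OF r1 r2 ne] show False
  proof
    assume "subseq [r1, r2] B"
    then have "subseq ([v] @ [m, r1, r2]) (L @ m # B)"
      using vL by (intro list_emb_append_mono) auto
    moreover have "bad v m r1 r2" unfolding bad_def using lt r2m by auto
    ultimately show False using r unfolding rect_def by auto
  next
    assume "subseq [r2, r1] B"
    then have "subseq ([v] @ [m, r2, r1]) (L @ m # B)"
      using vL by (intro list_emb_append_mono) auto
    moreover have "bad v m r2 r1" unfolding bad_def using lt r2m by auto
    ultimately show False using r unfolding rect_def by auto
  qed
qed

lemma fT_props:
  assumes xs: "xs \<in> Tset (Suc k)"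
  shows "gT k (fT k xs) = xs \<and> fT k xs \<in> UNIV \<times> Uset k"
proof -
  obtain L x y R0 where xs0: "xs = L @ Suc k # x # y # R0" and C: "xs \<in> CC (Suc k)"
    using xs unfolding Tset_def by blast
  define R where "R = y # R0"
  have xsd: "xs = L @ Suc k # x # R" "R \<noteq> []" using xs0 R_def by auto
  have d: "distinct xs" and s: "set xs = {1..Suc k}" and r: "rect xs" using C unfolding CC_def by auto
  have nL: "Suc k \<notin> set L" "Suc k \<noteq> x" "Suc k \<notin> set R" "x \<notin> set L" "x \<notin> set R"
    "set L \<inter> set R = {}" using d xsd(1) by auto
  have sxs: "set xs = set L \<union> {Suc k, x} \<union> set R" using xsd(1) by auto
  have bL: "1 \<le> v \<and> v \<le> k" if "v \<in> set L" for v
  proof -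
    have "v \<in> {1..Suc k}" using that s sxs by blast
    moreover have "v \<noteq> Suc k" using that nL by blast
    ultimately show ?thesis by auto
  qed
  have bR: "1 \<le> v \<and> v \<le> k" if "v \<in> set R" for v
  proof -
    have "v \<in> {1..Suc k}" using that s sxs by blast
    moreover have "v \<noteq> Suc k" using that nL by blast
    ultimately show ?thesis by auto
  qed
  have bx: "1 \<le> x \<and> x \<le> k"
  proof -
    have "x \<in> {1..Suc k}" using s sxs by blast
    then show ?thesis using nL(2) by auto
  qed
  have rx: "rect (L @ Suc k # x # R)" using r xsd(1) by simp
  have Rm: "\<forall>v\<in>set R. v < Suc k"
  proof
    fix v assume "v \<in> set R"
    then show "v < Suc k" using bR[of v] by simp
  qed
  have ext: False if "r1 \<in> set R" "r2 \<in> set R" "r1 < x" "x < r2" for r1 r2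
    using ext_rect[OF rx _ Rm that] bx by auto
  have xRm: "\<forall>v\<in>set (x # R). v < Suc k" using Rm bx by simp
  have int: False if "v \<in> set L" "r1 \<in> set (x # R)" "r2 \<in> set (x # R)" "r1 < v" "v < r2" for v r1 r2
    using int_rect[of L "Suc k" "x # R", OF _ xRm that] rx by simp
  define b where "b = (x < hd R)"
  have hR: "hd R \<in> set R" using xsd(2) by simp
  have us: "unsh x (Suc k) = k" using bx unfolding unsh_def by auto
  have fx: "fT k xs = (b, map (unsh x) L @ k # map (unsh x) R)"
    using fT_eq[OF nL(1), of x R] xsd(1) us b_def by simp
  have kL: "k \<notin> set (map (unsh x) L)"
  proof
    assume "k \<in> set (map (unsh x) L)"
    then obtain v where v: "v \<in> set L" "unsh x v = k" by auto
    have "v \<le> k" "v \<noteq> x" using bL[OF v(1)] v(1) nL(4) by auto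
    then show False using v(2) bx unfolding unsh_def by (auto split: if_splits)
  qed
  have x_eq: "(if b then Min (set (map (unsh x) R)) else Suc (Max (set (map (unsh x) R)))) = x"
  proof (cases b)
    case True
    then have xh: "x < hd R" unfolding b_def .
    have allgt: "x < r" if "r \<in> set R" for r
    proof (rule ccontr)
      assume "\<not> x < r"
      moreover have "r \<noteq> x" using that nL(5) by blast
      ultimately have "r < x" by simp
      then show False using ext[OF that hR] xh by simp
    qed
    have x1: "Suc x \<in> set R"
    proof -
      have "Suc x \<in> set xs" using s bx by auto
      moreover have "Suc x \<noteq> Suc k"
      proof
        assume "Suc x = Suc k"
        then have "x = k" by simp
        then show False using xh bR[OF hR] by simp
      qed
      moreover have "Suc x \<notin> set L"
      proof
        assume a: "Suc x \<in> set L"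
        have "hd R \<noteq> Suc x" using a hR nL(6) disjoint_iff by metis
        then have "Suc x < hd R" using xh by simp
        then show False using int[OF a, of x "hd R"] hR by simp
      qed
      ultimately show ?thesis using sxs by auto
    qed
    have "Min (set (map (unsh x) R)) = x"
    proof (rule Min_eqI)
      show "finite (set (map (unsh x) R))" by simp
      show "x \<le> y" if yy: "y \<in> set (map (unsh x) R)" for y
      proof -
        obtain r where rr: "r \<in> set R" "y = unsh x r" using yy by auto
        then have "x < r" using allgt by blast
        then show ?thesis using rr(2) unfolding unsh_def by simp
      qed
      show "x \<in> set (map (unsh x) R)" using x1 unfolding unsh_def by force
    qed
    then show ?thesis using True by simp
  next
    case False
    then have xh: "\<not> x < hd R" unfolding b_def .
    have "hd R \<noteq> x" using hR nL(5) by blast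
    then have hx: "hd R < x" using xh by simp
    have alllt: "r < x" if "r \<in> set R" for r
    proof (rule ccontr)
      assume "\<not> r < x"
      moreover have "r \<noteq> x" using that nL(5) by blast
      ultimately have "x < r" by simp
      then show False using ext[OF hR that] hx by simp
    qed
    have x2: "2 \<le> x" using hx bR[OF hR] by simp
    have x1: "x - 1 \<in> set R"
    proof -
      have "x - 1 \<in> set xs" using s bx x2 by auto
      moreover have "x - 1 \<noteq> Suc k" "x - 1 \<noteq> x" using bx x2 by auto
      moreover have "x - 1 \<notin> set L"
      proof
        assume a: "x - 1 \<in> set L"
        have "hd R \<noteq> x - 1" using a hR nL(6) disjoint_iff by metis
        then have "hd R < x - 1" using hx by simp
        then show False using int[OF a, of "hd R" x] hR x2 by simp
      qed
      ultimately show ?thesis using sxs by auto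
    qed
    have "Max (set (map (unsh x) R)) = x - 1"
    proof (rule Max_eqI)
      show "finite (set (map (unsh x) R))" by simp
      show "y \<le> x - 1" if yy: "y \<in> set (map (unsh x) R)" for y
      proof -
        obtain r where rr: "r \<in> set R" "y = unsh x r" using yy by auto
        then have "r < x" using alllt by blast
        then show ?thesis using rr(2) unfolding unsh_def by simp
      qed
      show "x - 1 \<in> set (map (unsh x) R)"
      proof -
        have "unsh x (x - 1) = x - 1" unfolding unsh_def by simp
        then show ?thesis using x1 by force
      qed
    qed
    then show ?thesis using False x2 by simp
  qed
  have inv: "gT k (fT k xs) = xs"
  proof -
    have "gT k (fT k xs) = map (sh x) (map (unsh x) L) @ Suc k # x # map (sh x) (map (unsh x) R)"
      unfolding fx gT_eq[OF kL] x_eq ..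
    also have "map (sh x) (map (unsh x) L) = L"
      using nL(4) by (induction L) (auto simp: sh_unsh)
    also have "map (sh x) (map (unsh x) R) = R"
      using nL(5) by (induction R) (auto simp: sh_unsh)
    finally show ?thesis using xsd(1) by simp
  qed
  have into: "map (unsh x) (L @ Suc k # R) \<in> Uset k"
  proof -
    let ?Z = "L @ Suc k # R"
    have xZ: "x \<notin> set ?Z" using nL by auto
    have dZ: "distinct ?Z" using d xsd(1) by auto
    have dm: "distinct (map (unsh x) ?Z)"
    proof -
      have "inj_on (unsh x) (set ?Z)" by (rule inj_on_subset[OF unsh_inj]) (use xZ in blast)
      then show ?thesis using dZ distinct_map by blast
    qed
    have sZ: "set ?Z = {1..Suc k} - {x}" using s sxs nL by auto
    have sm: "set (map (unsh x) ?Z) = {1..k}"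
    proof -
      have "set (map (unsh x) ?Z) = unsh x ` set ?Z" by (rule set_map)
      also have "\<dots> = unsh x ` ({1..Suc k} - {x})" using sZ by (rule arg_cong)
      also have "\<dots> = {1..k}" using unsh_image[of x k] bx by simp
      finally show ?thesis .
    qed
    have rZ: "rect ?Z" using rect_del[of "L @ [Suc k]" x R] rx by simp
    have rm: "rect (map (unsh x) ?Z)"
      by (rule rect_map[OF _ rZ]) (metis unsh_mono xZ)
    have "map (unsh x) ?Z \<in> CC k" using dm sm rm unfolding CC_def by blast
    moreover obtain y' R' where "map (unsh x) R = y' # R'" using xsd(2) by (cases R) auto
    ultimately show ?thesis unfolding Uset_def using us by auto
  qed
  have "fT k xs \<in> UNIV \<times> Uset k" using fx into us by simp
  then show ?thesis using inv by blast
qed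

lemma gT_props:
  assumes ys: "ys \<in> Uset k"
  shows "fT k (gT k (b, ys)) = (b, ys) \<and> gT k (b, ys) \<in> Tset (Suc k)"
proof -
  obtain L y R0 where ys0: "ys = L @ k # y # R0" and C: "ys \<in> CC k"
    using ys unfolding Uset_def by blast
  define R where "R = y # R0"
  have ysd: "ys = L @ k # R" using ys0 R_def by simp
  have Rne: "R \<noteq> []" using R_def by simp
  have d: "distinct ys" and s: "set ys = {1..k}" and r: "rect ys" using C unfolding CC_def by auto
  have nL: "k \<notin> set L" "k \<notin> set R" "set L \<inter> set R = {}" using d ysd by auto
  have sys: "set ys = set L \<union> {k} \<union> set R" using ysd by auto
  have bL: "1 \<le> v \<and> v < k" if "v \<in> set L" for v
  proof -
    have "v \<in> {1..k}" using that s sys by blast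
    moreover have "v \<noteq> k" using that nL by blast
    ultimately show ?thesis by auto
  qed
  have bR: "1 \<le> v \<and> v < k" if "v \<in> set R" for v
  proof -
    have "v \<in> {1..k}" using that s sys by blast
    moreover have "v \<noteq> k" using that nL by blast
    ultimately show ?thesis by auto
  qed
  have Rm: "\<forall>v\<in>set R. v < k"
  proof
    fix v assume "v \<in> set R"
    then show "v < k" using bR[of v] by simp
  qed
  have rr: "rect (L @ k # R)" using r ysd by simp
  have int: False if "v \<in> set L" "r1 \<in> set R" "r2 \<in> set R" "r1 < v" "v < r2" for v r1 r2
    using int_rect[OF rr Rm that] .
  define x where "x = (if b then Min (set R) else Suc (Max (set R)))"
  have hR: "y \<in> set R" using R_def by simp
  have MinR: "Min (set R) \<in> set R" "\<forall>v\<in>set R. Min (set R) \<le> v" using Rne by auto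
  have MaxR: "Max (set R) \<in> set R" "\<forall>v\<in>set R. v \<le> Max (set R)" using Rne by auto
  have bx: "1 \<le> x \<and> x \<le> k"
  proof (cases b)
    case True then show ?thesis using x_def bR[OF MinR(1)] by simp
  next
    case False then show ?thesis using x_def bR[OF MaxR(1)] by simp
  qed
  have g: "gT k (b, ys) = map (sh x) L @ Suc k # x # map (sh x) R"
    unfolding ysd gT_eq[OF nL(1)] x_def ..
  have SkL: "Suc k \<notin> set (map (sh x) L)"
  proof
    assume "Suc k \<in> set (map (sh x) L)"
    then obtain v where vv: "v \<in> set L" "sh x v = Suc k" by auto
    then have "v < k" using bL by blast
    then show False using vv(2) unfolding sh_def by (auto split: if_splits)
  qed
  have shk: "sh x k = Suc k" using bx unfolding sh_def by simp
  have unk: "unsh x (Suc k) = k" using bx unfolding unsh_def by auto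
  have bhd: "b = (x < sh x y)"
  proof (cases b)
    case True
    then have "x \<le> y" using x_def MinR(2) hR by simp
    then show ?thesis using True unfolding sh_def by simp
  next
    case False
    then have "y < x" using x_def MaxR(2) hR by (simp add: le_imp_less_Suc)
    then show ?thesis using False unfolding sh_def by simp
  qed
  have inv: "fT k (gT k (b, ys)) = (b, ys)"
  proof -
    have "fT k (gT k (b, ys)) = (x < hd (map (sh x) R), map (unsh x) (map (sh x) L @ Suc k # map (sh x) R))"
      unfolding g by (rule fT_eq[OF SkL])
    also have "x < hd (map (sh x) R) \<longleftrightarrow> b" using bhd R_def by simp
    also have "map (unsh x) (map (sh x) L @ Suc k # map (sh x) R) = L @ k # R"
      using unk by (simp add: unsh_sh comp_def)
    finally show ?thesis using ysd by simp
  qed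
  define A where "A = map (sh x) L @ [Suc k]"
  define B where "B = map (sh x) R"
  have AB: "A @ B = map (sh x) ys" unfolding A_def B_def ysd using shk by simp
  have dAB: "distinct (A @ B)" unfolding AB using d sh_inj distinct_map by (metis inj_on_subset subset_UNIV)
  have xAB: "x \<notin> set (A @ B)" unfolding AB using sh_neq by (metis ex_map_conv)
  have gAB: "gT k (b, ys) = A @ x # B" unfolding g A_def B_def by simp
  have dist: "distinct (A @ x # B)" using dAB xAB by auto
  have setx: "set (A @ x # B) = {1..Suc k}"
  proof -
    have "set (A @ x # B) = insert x (set (A @ B))" by auto
    also have "\<dots> = insert x (sh x ` {1..k})" unfolding AB using s by simp
    also have "\<dots> = insert x ({1..Suc k} - {x})" using sh_image[of x k] bx by simp
    also have "\<dots> = {1..Suc k}" using bx by auto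
    finally show ?thesis .
  qed
  have rAB: "rect (A @ B)" unfolding AB by (rule rect_map[OF _ r]) (metis sh_mono)
  have ext: "(\<forall>v\<in>set B. x < v) \<or> (\<forall>v\<in>set B. v < x)"
  proof (cases b)
    case True
    have "x < v" if vB: "v \<in> set B" for v
    proof -
      obtain r0 where r0: "r0 \<in> set R" "v = sh x r0" using vB B_def by auto
      have "x \<le> r0" using True x_def MinR(2) r0(1) by simp
      then show ?thesis using r0(2) unfolding sh_def by simp
    qed
    then show ?thesis by blast
  next
    case False
    have "v < x" if vB: "v \<in> set B" for v
    proof -
      obtain r0 where r0: "r0 \<in> set R" "v = sh x r0" using vB B_def by auto
      have "r0 \<le> Max (set R)" using MaxR(2) r0(1) by simp
      then have "r0 < x" using False x_def by simp
      then show ?thesis using r0(2) unfolding sh_def by simp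
    qed
    then show ?thesis by blast
  qed
  have intx: "\<forall>v\<in>set A. \<forall>w\<in>set B. \<not>(x < v \<and> v < w) \<and> \<not>(w < v \<and> v < x)"
  proof (intro ballI)
    fix v w assume vA: "v \<in> set A" and wB: "w \<in> set B"
    obtain r0 where r0: "r0 \<in> set R" "w = sh x r0" using wB B_def by auto
    have r0k: "r0 < k" using bR[OF r0(1)] by simp
    have wk: "w < Suc k" using r0 r0k unfolding sh_def by auto
    show "\<not>(x < v \<and> v < w) \<and> \<not>(w < v \<and> v < x)"
    proof (cases "v = Suc k")
      case True
      then show ?thesis using wk bx by auto
    next
      case False
      then obtain u where u: "u \<in> set L" "v = sh x u" using vA A_def by auto
      have ur: "u \<noteq> r0" using u(1) r0(1) nL(3) disjoint_iff by metis
      show ?thesis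
      proof (cases b)
        case True
        then have xm: "x = Min (set R)" using x_def by simp
        have ux: "u \<noteq> x" using u(1) MinR(1) xm nL(3) disjoint_iff by metis
        have xr0: "x \<le> r0" using xm MinR(2) r0(1) by simp
        have w1: "w = Suc r0" using r0(2) xr0 unfolding sh_def by simp
        show ?thesis
        proof (cases "x \<le> u")
          case True
          then have v1: "v = Suc u" using u(2) unfolding sh_def by simp
          have "\<not> (u < r0)"
          proof
            assume "u < r0"
            moreover have "x < u" using True ux by simp
            ultimately show False using int[OF u(1) MinR(1) r0(1)] xm by simp
          qed
          then show ?thesis using v1 w1 True ux by auto
        next
          case False
          then have "v = u" using u(2) unfolding sh_def by simp
          then show ?thesis using False w1 xr0 by auto
        qed
      next
        case False
        then have xm: "x = Suc (Max (set R))" using x_def by simp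
        have um: "u \<noteq> Max (set R)" using u(1) MaxR(1) nL(3) disjoint_iff by metis
        have r0M: "r0 \<le> Max (set R)" using MaxR(2) r0(1) by simp
        have w1: "w = r0" using r0(2) r0M xm unfolding sh_def by simp
        show ?thesis
        proof (cases "x \<le> u")
          case True
          then have "v = Suc u" using u(2) unfolding sh_def by simp
          then show ?thesis using True w1 r0M xm by auto
        next
          case False
          then have v1: "v = u" using u(2) unfolding sh_def by simp
          have "\<not> (r0 < u \<and> u < Max (set R))"
          proof
            assume "r0 < u \<and> u < Max (set R)"
            then show False using int[OF u(1) r0(1) MaxR(1)] by simp
          qed
          then show ?thesis using v1 w1 False um r0M xm by auto
        qed
      qed
    qed
  qed
  have Bne: "B \<noteq> []" using Rne B_def by simp
  have dj: "set A \<inter> set B = {}" using dAB by simp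
  have mA: "Suc k \<in> set A" using A_def by simp
  have "rect (A @ x # B)" by (rule rect_insert[OF rAB mA _ ext intx Bne dj]) (use bx in simp)
  then have "A @ x # B \<in> CC (Suc k)" using dist setx unfolding CC_def by blast
  moreover have "A @ x # B = map (sh x) L @ Suc k # x # sh x y # map (sh x) R0"
    unfolding A_def B_def R_def by simp
  ultimately have "gT k (b, ys) \<in> Tset (Suc k)" unfolding gAB Tset_def by blast
  then show ?thesis using inv by blast
qed

lemma card_Tset: "card (Tset (Suc k)) = 2 * card (Uset k)"
proof -
  have "bij_betw (fT k) (Tset (Suc k)) (UNIV \<times> Uset k)"
  proof (rule bij_betw_byWitness[where f' = "gT k"])
    show "\<forall>a\<in>Tset (Suc k). gT k (fT k a) = a" using fT_props by blast
    show "\<forall>a'\<in>UNIV \<times> Uset k. fT k (gT k a') = a'" using gT_props by force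
    show "fT k ` Tset (Suc k) \<subseteq> UNIV \<times> Uset k" using fT_props by blast
    show "gT k ` (UNIV \<times> Uset k) \<subseteq> Tset (Suc k)" using gT_props by force
  qed
  then have "card (Tset (Suc k)) = card ((UNIV :: bool set) \<times> Uset k)" by (rule bij_betw_same_card)
  also have "\<dots> = 2 * card (Uset k)" by (simp add: card_cartesian_product)
  finally show ?thesis .
qed

lemma rec1: "m \<ge> 2 \<Longrightarrow> card (CC m) = 2 * card (CC (m - 1)) + card (Tset m)"
  using card_CC_split[of m] card_Zset[of m] card_Oset[of m] by simp

lemma rec2: "k \<ge> 2 \<Longrightarrow> card (Tset (Suc k)) = 2 * (card (CC (k - 1)) + card (Tset k))"
  using card_Tset[of k] card_Uset[of k] card_Oset[of k] by simp

lemma CC_1: "CC 1 = {[1]}"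
proof
  show "CC 1 \<subseteq> {[1]}"
  proof
    fix xs assume xs: "xs \<in> CC 1"
    then have "length xs = 1" "set xs = {1}" using CC_length[OF xs] unfolding CC_def by auto
    then show "xs \<in> {[1]}" by (cases xs) auto
  qed
  have "rect [1]" unfolding rect_def using list_emb_length by fastforce
  then show "{[1]} \<subseteq> CC 1" unfolding CC_def by auto
qed

lemma Tset_2: "Tset 2 = {}"
proof -
  { fix xs assume "xs \<in> Tset 2"
    then obtain L x y R where xx: "xs \<in> CC 2" "xs = L @ 2 # x # y # R" unfolding Tset_def by blast
    have "length xs = 2" using CC_length[OF xx(1)] .
    moreover have "length xs \<ge> 3" using xx(2) by simp
    ultimately have False by linarith }
  then show ?thesis by blast
qed

lemma main_count: "ec (2 * k) 4 = card (CC (k + 1)) \<and> ec (2 * k) 2 + ec (2 * k) 6 = card (Tset (k + 2))"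
proof (induction k)
  case 0
  show ?case using CC_1 Tset_2 by (simp add: numeral_eq_Suc)
next
  case (Suc k)
  have e: "2 * Suc k = Suc (Suc (2 * k))" by simp
  have a: "ec (2 * Suc k) 4 = card (CC (Suc k + 1))"
  proof -
    have "ec (2 * Suc k) 4 = 2 * ec (2 * k) 4 + (ec (2 * k) 2 + ec (2 * k) 6)"
      unfolding e by (rule ec_step4)
    also have "\<dots> = 2 * card (CC (k + 1)) + card (Tset (k + 2))" using Suc.IH by simp
    also have "\<dots> = card (CC (k + 2))" using rec1[of "k + 2"] by simp
    finally show ?thesis by simp
  qed
  have b: "ec (2 * Suc k) 2 + ec (2 * Suc k) 6 = card (Tset (Suc k + 2))"
  proof -
    have "ec (2 * Suc k) 2 + ec (2 * Suc k) 6 = 2 * ec (2 * k) 4 + 2 * (ec (2 * k) 2 + ec (2 * k) 6)"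
      unfolding e by (rule ec_step26)
    also have "\<dots> = 2 * (card (CC (k + 1)) + card (Tset (k + 2)))" using Suc.IH by simp
    also have "\<dots> = card (Tset (Suc (k + 2)))" using rec2[of "k + 2"] by simp
    finally show ?thesis by simp
  qed
  show ?case using a b by blast
qed

theorem theorem8p1:
  fixes n :: nat
  assumes "n \<ge> 1"
  shows "\<exists>f. bij_betw f (P7_walks_v4 (2 * n - 2)) (rect_perms n)"
proof -
  obtain k where k: "n = k + 1" using assms by (metis add.commute le_Suc_ex)
  have l: "2 * n - 2 = 2 * k" using k by simp
  have w: "P7_walks_v4 (2 * n - 2) = EE (2 * k) 4" unfolding l P7_walks_v4_def EE_def ..
  have "card (P7_walks_v4 (2 * n - 2)) = card (CC n)"
    unfolding w card_EE using main_count[of k] k by simp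
  also have "\<dots> = card (rect_perms n)" using bij_betw_same_card[OF bij_perms_CC[of n]] by simp
  finally have c: "card (P7_walks_v4 (2 * n - 2)) = card (rect_perms n)" .
  have f1: "finite (P7_walks_v4 (2 * n - 2))" unfolding w by (rule finite_EE)
  have f2: "finite (rect_perms n)"
    using bij_betw_finite[OF bij_perms_CC[of n]] finite_CC by simp
  show ?thesis using finite_same_card_bij[OF f1 f2 c] .
qed

end
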